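(* Let $A$ be a circular $m\times n$ matrix, $b\in\mathbb{Z}_+^m$ and $x^*\in Q(A,b)$ such that every circuit in $D(A,x^* )$ has non-negative cost. Then $x^*\in Q^*(A,b)$.
   Context: Notation: $[n]=\{1,\dots,n\}$ with addition mod $n$ (index $0$ identified with $n$); for $a,c\in[n]$ with $t\ge0$ minimal such that $a+t\equiv c\pmod n$, $[a,c)_n=\{a,\dots,a+t-1\}$ (mod $n$). An $m\times n$ $\{0,1\}$-matrix $A$ is circular if for each row $i$ there are $\ell_i\in[n]$ and an integer $2\le k_i\le n-1$ with row $i$ the incidence vector of $[\ell_i,\ell_i+k_i)_n$. $Q(A,b)=\{x\ge0:Ax\ge b\}$, $Q^*(A,b)=\operatorname{conv}(Q(A,b)\cap\mathbb{Z}^n)$. $D(A)$: digraph (multigraph allowed) on node set $[n]$ (labels mod $n$) with forward arcs $a_i=(\ell_i-1,\ell_i+k_i-1)$ ($i\in[m]$) and $a_{m+j}=(j-1,j)$ ($j\in[n]$), and reverse arcs $\bar a_i=(\ell_i+k_i-1,\ell_i-1)$ ($i\in[m]$) and $\bar a_{m+j}=(j,j-1)$ ($j\in[n]$). A circuit is a simple directed circuit. Costs: $\tilde A=\binom{A}{I}\in\{0,1\}^{(m+n)\times n}$ ($I$ the $n\times n$ identity), $d=\binom{b}{0}\in\mathbb{Z}^{m+n}$, $v$ = last column of $\tilde A$. For $x^*\in Q(A,b)$: $s^*=\tilde Ax^*-d$, $\mu=\lceil\mathbf{1}^Tx^*\rceil-\mathbf{1}^Tx^*$, $c^+(x^* )=\mu(s^*-(1-\mu)v)$,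 $c^-(x^* )=(1-\mu)(s^*+\mu v)$. $D(A,x^* )$ is $D(A)$ where arc $a_k$ ($k\in[m+n]$) has cost $c^+_k(x^* )$ and arc $\bar a_k$ has cost $c^-_k(x^* )$; the cost of a path is the sum of the costs of its arcs. *)

theory Defs
  imports Complex_Main
begin

text \<open>Rows of A are indexed by 1..m, columns by 1..n. A matrix is a function
  A :: nat => nat => int (only entries with i in 1..m, j in 1..n matter); vectors are
  functions on the index set. Nodes of D(A) are the residues 0..n-1 (label n identified with 0).\<close>

text \<open>Row i of A is the incidence vector of the circular interval [l_i, l_i + k_i)_n:
  column j belongs to it iff (j - l_i) mod n < k_i.\<close>
definition circular_rep ::
  "nat \<Rightarrow> nat \<Rightarrow> (nat \<Rightarrow> nat \<Rightarrow> int) \<Rightarrow> (nat \<Rightarrow> nat) \<Rightarrow> (nat \<Rightarrow> nat) \<Rightarrow> bool" where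
  "circular_rep m n A l k \<longleftrightarrow>
     (\<forall>i\<in>{1..m}. l i \<in> {1..n} \<and> 2 \<le> k i \<and> k i \<le> n - 1 \<and>
        (\<forall>j\<in>{1..n}. A i j = (if (j + n - l i) mod n < k i then 1 else 0)))"

definition inQ :: "nat \<Rightarrow> nat \<Rightarrow> (nat \<Rightarrow> nat \<Rightarrow> int) \<Rightarrow> (nat \<Rightarrow> int) \<Rightarrow> (nat \<Rightarrow> real) \<Rightarrow> bool" where
  "inQ m n A b x \<longleftrightarrow> (\<forall>j\<in>{1..n}. 0 \<le> x j) \<and>
     (\<forall>i\<in>{1..m}. (\<Sum>j=1..n. real_of_int (A i j) * x j) \<ge> real_of_int (b i))"

text \<open>Q*(A,b): convex hull of the integer points of Q(A,b), written out as convex combinations.\<close>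
definition inQstar :: "nat \<Rightarrow> nat \<Rightarrow> (nat \<Rightarrow> nat \<Rightarrow> int) \<Rightarrow> (nat \<Rightarrow> int) \<Rightarrow> (nat \<Rightarrow> real) \<Rightarrow> bool" where
  "inQstar m n A b x \<longleftrightarrow>
     (\<exists>(N::nat) (p :: nat \<Rightarrow> nat \<Rightarrow> int) (w :: nat \<Rightarrow> real).
        (\<forall>t<N. 0 \<le> w t \<and> inQ m n A b (\<lambda>j. real_of_int (p t j))) \<and>
        (\<Sum>t<N. w t) = 1 \<and>
        (\<forall>j\<in>{1..n}. x j = (\<Sum>t<N. w t * real_of_int (p t j))))"

text \<open>Arcs of D(A): (e, True) is the forward arc a_e, (e, False) the reverse arc of a_e,
  for e in 1..m+n.\<close>
type_synonym arc = "nat \<times> bool"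

definition arc_valid :: "nat \<Rightarrow> nat \<Rightarrow> arc \<Rightarrow> bool" where
  "arc_valid m n a \<longleftrightarrow> fst a \<in> {1..m+n}"

definition fwd_tail :: "nat \<Rightarrow> nat \<Rightarrow> (nat \<Rightarrow> nat) \<Rightarrow> (nat \<Rightarrow> nat) \<Rightarrow> nat \<Rightarrow> nat" where
  "fwd_tail m n l k e = (if e \<le> m then (l e - 1) mod n else (e - m - 1) mod n)"

definition fwd_head :: "nat \<Rightarrow> nat \<Rightarrow> (nat \<Rightarrow> nat) \<Rightarrow> (nat \<Rightarrow> nat) \<Rightarrow> nat \<Rightarrow> nat" where
  "fwd_head m n l k e = (if e \<le> m then (l e + k e - 1) mod n else (e - m) mod n)"

definition arc_tail :: "nat \<Rightarrow> nat \<Rightarrow> (nat \<Rightarrow> nat) \<Rightarrow> (nat \<Rightarrow> nat) \<Rightarrow> arc \<Rightarrow> nat" where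
  "arc_tail m n l k a = (if snd a then fwd_tail m n l k (fst a) else fwd_head m n l k (fst a))"

definition arc_head :: "nat \<Rightarrow> nat \<Rightarrow> (nat \<Rightarrow> nat) \<Rightarrow> (nat \<Rightarrow> nat) \<Rightarrow> arc \<Rightarrow> nat" where
  "arc_head m n l k a = (if snd a then fwd_head m n l k (fst a) else fwd_tail m n l k (fst a))"

definition is_circuit :: "nat \<Rightarrow> nat \<Rightarrow> (nat \<Rightarrow> nat) \<Rightarrow> (nat \<Rightarrow> nat) \<Rightarrow> arc list \<Rightarrow> bool" where
  "is_circuit m n l k cs \<longleftrightarrow> cs \<noteq> [] \<and> (\<forall>a\<in>set cs. arc_valid m n a) \<and>
     (\<forall>t<length cs. arc_head m n l k (cs ! t) = arc_tail m n l k (cs ! ((t + 1) mod length cs))) \<and>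
     distinct (map (arc_tail m n l k) cs)"

text \<open>s* = (A;I) x - (b;0), indexed by 1..m+n.\<close>
definition slack :: "nat \<Rightarrow> nat \<Rightarrow> (nat \<Rightarrow> nat \<Rightarrow> int) \<Rightarrow> (nat \<Rightarrow> int) \<Rightarrow> (nat \<Rightarrow> real) \<Rightarrow> nat \<Rightarrow> real" where
  "slack m n A b x r = (if r \<le> m then (\<Sum>j=1..n. real_of_int (A r j) * x j) - real_of_int (b r)
                        else x (r - m))"

definition lastcol :: "nat \<Rightarrow> nat \<Rightarrow> (nat \<Rightarrow> nat \<Rightarrow> int) \<Rightarrow> nat \<Rightarrow> real" where
  "lastcol m n A r = (if r \<le> m then real_of_int (A r n) else (if r - m = n then 1 else 0))"

definition mu :: "nat \<Rightarrow> (nat \<Rightarrow> real) \<Rightarrow> real" where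
  "mu n x = real_of_int \<lceil>\<Sum>j=1..n. x j\<rceil> - (\<Sum>j=1..n. x j)"

definition cplus :: "nat \<Rightarrow> nat \<Rightarrow> (nat \<Rightarrow> nat \<Rightarrow> int) \<Rightarrow> (nat \<Rightarrow> int) \<Rightarrow> (nat \<Rightarrow> real) \<Rightarrow> nat \<Rightarrow> real" where
  "cplus m n A b x r = mu n x * (slack m n A b x r - (1 - mu n x) * lastcol m n A r)"

definition cminus :: "nat \<Rightarrow> nat \<Rightarrow> (nat \<Rightarrow> nat \<Rightarrow> int) \<Rightarrow> (nat \<Rightarrow> int) \<Rightarrow> (nat \<Rightarrow> real) \<Rightarrow> nat \<Rightarrow> real" where
  "cminus m n A b x r = (1 - mu n x) * (slack m n A b x r + mu n x * lastcol m n A r)"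

definition arc_cost :: "nat \<Rightarrow> nat \<Rightarrow> (nat \<Rightarrow> nat \<Rightarrow> int) \<Rightarrow> (nat \<Rightarrow> int) \<Rightarrow> (nat \<Rightarrow> real) \<Rightarrow> arc \<Rightarrow> real" where
  "arc_cost m n A b x a = (if snd a then cplus m n A b x (fst a) else cminus m n A b x (fst a))"

end

theory Submission
  imports Defs
begin


fun walk :: "('a \<Rightarrow> 'v) \<Rightarrow> ('a \<Rightarrow> 'v) \<Rightarrow> 'v \<Rightarrow> 'a list \<Rightarrow> 'v \<Rightarrow> bool" where
  "walk T H u [] v \<longleftrightarrow> u = v"
| "walk T H u (a # ps) v \<longleftrightarrow> T a = u \<and> walk T H (H a) ps v"

lemma walk_append: "walk T H u (xs @ ys) v \<longleftrightarrow> (\<exists>w. walk T H u xs w \<and> walk T H w ys v)"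
  by (induction xs arbitrary: u) auto

lemma walk_snoc: "walk T H u (xs @ [a]) v \<longleftrightarrow> walk T H u xs (T a) \<and> H a = v"
  by (auto simp: walk_append)

lemma walk_first: "walk T H u ps v \<Longrightarrow> ps \<noteq> [] \<Longrightarrow> T (hd ps) = u"
  by (cases ps) auto

lemma walk_last: "walk T H u ps v \<Longrightarrow> ps \<noteq> [] \<Longrightarrow> H (last ps) = v"
  by (induction ps arbitrary: u) auto

lemma walk_nth: "walk T H u ps v \<Longrightarrow> Suc t < length ps \<Longrightarrow> H (ps!t) = T (ps ! Suc t)"
proof (induction ps arbitrary: u t)
  case Nil then show ?case by simp
next
  case (Cons a ps)
  show ?case
  proof (cases t)
    case 0
    with Cons.prems have "ps \<noteq> []" by auto
    with Cons.prems walk_first[of T H "H a" ps v] show ?thesis using 0 by (simp add: hd_conv_nth)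
  next
    case (Suc t')
    with Cons show ?thesis by auto
  qed
qed

lemma walk_cyclic:
  assumes "walk T H u cs u" "cs \<noteq> []" "t < length cs"
  shows "H (cs ! t) = T (cs ! ((t + 1) mod length cs))"
proof (cases "Suc t < length cs")
  case True then show ?thesis using walk_nth[OF assms(1)] by simp
next
  case False
  then have t: "t = length cs - 1" using assms by simp
  then have "cs ! t = last cs" using assms(2) by (simp add: last_conv_nth)
  moreover have "(t + 1) mod length cs = 0" using t assms by simp
  ultimately show ?thesis using walk_last[OF assms(1,2)] walk_first[OF assms(1,2)] assms(2)
    by (simp add: hd_conv_nth)
qed

lemma potentials:
  fixes T H :: "'a \<Rightarrow> 'v" and c :: "'a \<Rightarrow> real" and E :: "'a set"
  assumes fin: "finite E"
    and cyc: "\<And>u cs. cs \<noteq> [] \<Longrightarrow> set cs \<subseteq> E \<Longrightarrow> walk T H u cs u \<Longrightarrow> distinct (map T cs)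
               \<Longrightarrow> 0 \<le> sum_list (map c cs)"
  shows "\<exists>\<phi>. \<forall>a\<in>E. \<phi> (H a) \<le> \<phi> (T a) + c a"
proof -
  define SP where "SP v = {ps. set ps \<subseteq> E \<and> (\<exists>u. walk T H u ps v) \<and> distinct (map T ps) \<and> v \<notin> T ` set ps}" for v
  have finSP: "finite (SP v)" for v
  proof -
    have "SP v \<subseteq> {ps. set ps \<subseteq> E \<and> length ps \<le> card (T ` E)}"
    proof
      fix ps assume "ps \<in> SP v"
      then have ps: "set ps \<subseteq> E" "distinct (map T ps)" by (auto simp: SP_def)
      then have "length ps = card (set (map T ps))" by (metis distinct_card length_map)
      also have "\<dots> \<le> card (T ` E)" using ps fin by (intro card_mono) auto
      finally show "ps \<in> {ps. set ps \<subseteq> E \<and> length ps \<le> card (T ` E)}" using ps by simp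
    qed
    then show ?thesis using finite_lists_length_le[OF fin] finite_subset by blast
  qed
  have ne: "[] \<in> SP v" for v by (simp add: SP_def)
  define \<phi> where "\<phi> v = Min ((\<lambda>ps. sum_list (map c ps)) ` SP v)" for v
  have phi_le: "ps \<in> SP v \<Longrightarrow> \<phi> v \<le> sum_list (map c ps)" for ps v
    unfolding \<phi>_def using finSP by (intro Min_le) auto
  have phi_att: "\<exists>ps \<in> SP v. \<phi> v = sum_list (map c ps)" for v
  proof -
    have "\<phi> v \<in> (\<lambda>ps. sum_list (map c ps)) ` SP v"
      unfolding \<phi>_def using finSP ne by (intro Min_in) auto
    then show ?thesis by auto
  qed
  have key: "\<exists>qs\<in>SP (H a). sum_list (map c qs) \<le> sum_list (map c ps) + c a"
    if a: "a \<in> E" and ps: "ps \<in> SP (T a)" for a ps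
  proof -
    obtain u where wu: "walk T H u ps (T a)" and sE: "set ps \<subseteq> E" and dps: "distinct (map T ps)"
      and nin: "T a \<notin> T ` set ps" using ps by (auto simp: SP_def)
    consider (new) "H a \<notin> T ` set ps" "H a \<noteq> T a" | (loop) "H a = T a" | (old) "H a \<in> T ` set ps"
      by blast
    then show ?thesis
    proof cases
      case new
      have "ps @ [a] \<in> SP (H a)"
        unfolding SP_def using sE a wu dps nin new by (auto simp: walk_snoc)
      then show ?thesis by force
    next
      case loop
      have "0 \<le> sum_list (map c [a])"
        using cyc[of "[a]" "T a"] a loop by simp
      then show ?thesis using ps loop by force
    next
      case old
      then obtain i where i: "i < length ps" "T (ps ! i) = H a"
        by (metis image_iff in_set_conv_nth)
      have split: "ps = take i ps @ drop i ps" by simp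
      obtain w where w1: "walk T H u (take i ps) w" and w2: "walk T H w (drop i ps) (T a)"
        using wu split walk_append by metis
      have dne: "drop i ps \<noteq> []" using i by simp
      have "T (hd (drop i ps)) = w" using walk_first[OF w2 dne] .
      then have wH: "w = H a" using i by (simp add: hd_drop_conv_nth)
      have dist: "distinct (map T (take i ps) @ map T (drop i ps))"
        using dps split by (metis map_append)
      have inD: "ps ! i \<in> set (drop i ps)" using i dne
        by (metis hd_drop_conv_nth hd_in_set)
      have "take i ps \<in> SP (H a)"
        unfolding SP_def using sE set_take_subset[of i ps] w1 wH dist inD i
        by (auto simp: image_iff) (metis disjoint_iff image_eqI list.set_map)
      moreover have "0 \<le> sum_list (map c (drop i ps @ [a]))"
      proof (rule cyc[of _ "H a"])
        show "set (drop i ps @ [a]) \<subseteq> E" using sE a set_drop_subset[of i ps] by auto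
        show "walk T H (H a) (drop i ps @ [a]) (H a)" using w2 wH by (simp add: walk_snoc)
        show "distinct (map T (drop i ps @ [a]))"
          using dist nin set_drop_subset[of i ps] by auto
      qed simp
      moreover have "sum_list (map c ps) = sum_list (map c (take i ps)) + sum_list (map c (drop i ps))"
        by (metis map_append split sum_list_append)
      ultimately show ?thesis by force
    qed
  qed
  show ?thesis
  proof (intro exI ballI)
    fix a assume a: "a \<in> E"
    obtain ps where ps: "ps \<in> SP (T a)" "\<phi> (T a) = sum_list (map c ps)" using phi_att by blast
    obtain qs where "qs \<in> SP (H a)" "sum_list (map c qs) \<le> sum_list (map c ps) + c a"
      using key[OF a ps(1)] by blast
    then show "\<phi> (H a) \<le> \<phi> (T a) + c a" using phi_le ps(2) by fastforce
  qed
qed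




lemma cr_row:
  assumes "circular_rep m n A l k" "i \<in> {1..m}"
  shows "1 \<le> l i" "l i \<le> n" "2 \<le> k i" "k i \<le> n - 1"
    "\<And>j. j \<in> {1..n} \<Longrightarrow> A i j = (if (j + n - l i) mod n < k i then 1 else 0)"
  using assms unfolding circular_rep_def by auto

lemma mod_shift:
  fixes j n L :: nat
  assumes "1 \<le> j" "j \<le> n" "1 \<le> L" "L \<le> n"
  shows "(j + n - L) mod n = (if L \<le> j then j - L else j + n - L)"
proof (cases "L \<le> j")
  case True
  then have "j + n - L = (j - L) + n" by simp
  then have "(j + n - L) mod n = (j - L) mod n" by simp
  also have "\<dots> = j - L" using assms by simp
  finally show ?thesis using True by simp
next
  case False then show ?thesis using assms by simp
qed

lemma sum_split_ivl:
  fixes w :: "nat \<Rightarrow> real"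
  assumes "1 \<le> L" "L \<le> h + 1"
  shows "(\<Sum>j=L..h. w j) = (\<Sum>j=1..h. w j) - (\<Sum>j=1..L - 1. w j)"
proof -
  have "{1..h} = {1..L-1} \<union> {L..h}" using assms by auto
  then have "(\<Sum>j=1..h. w j) = (\<Sum>j=1..L-1. w j) + (\<Sum>j=L..h. w j)"
    by (simp add: sum.union_disjoint)
  then show ?thesis by simp
qed

lemma rowsum:
  fixes w :: "nat \<Rightarrow> real"
  assumes cr: "circular_rep m n A l k" and i: "i \<in> {1..m}"
  shows "(\<Sum>j=1..n. real_of_int (A i j) * w j) =
    (if l i + k i - 1 \<le> n then (\<Sum>j=1..l i + k i - 1. w j) - (\<Sum>j=1..l i - 1. w j)
     else (\<Sum>j=1..n. w j) - (\<Sum>j=1..l i - 1. w j) + (\<Sum>j=1..l i + k i - 1 - n. w j))"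
proof -
  note r = cr_row[OF cr i]
  let ?L = "l i" and ?K = "k i"
  have "(\<Sum>j=1..n. real_of_int (A i j) * w j) = (\<Sum>j=1..n. if (j + n - ?L) mod n < ?K then w j else 0)"
    using r(5) by (intro sum.cong) auto
  also have "\<dots> = (\<Sum>j\<in>{j\<in>{1..n}. (j + n - ?L) mod n < ?K}. w j)"
    by (rule sum.inter_filter[symmetric]) simp
  finally have e: "(\<Sum>j=1..n. real_of_int (A i j) * w j) = (\<Sum>j\<in>{j\<in>{1..n}. (j + n - ?L) mod n < ?K}. w j)" .
  show ?thesis
  proof (cases "?L + ?K - 1 \<le> n")
    case True
    have "{j\<in>{1..n}. (j + n - ?L) mod n < ?K} = {?L..?L + ?K - 1}"
    proof (intro set_eqI iffI)
      fix j assume "j \<in> {j\<in>{1..n}. (j + n - ?L) mod n < ?K}"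
      then show "j \<in> {?L..?L + ?K - 1}" using True r(1-4) mod_shift[of j n ?L]
        by (auto split: if_splits)
    next
      fix j assume "j \<in> {?L..?L + ?K - 1}"
      then show "j \<in> {j\<in>{1..n}. (j + n - ?L) mod n < ?K}" using True r(1-4) mod_shift[of j n ?L]
        by auto
    qed
    then show ?thesis using e True r sum_split_ivl[of ?L "?L + ?K - 1" w] by simp
  next
    case False
    have "{j\<in>{1..n}. (j + n - ?L) mod n < ?K} = {?L..n} \<union> {1..?L + ?K - 1 - n}"
    proof (intro set_eqI iffI)
      fix j assume "j \<in> {j\<in>{1..n}. (j + n - ?L) mod n < ?K}"
      then show "j \<in> {?L..n} \<union> {1..?L + ?K - 1 - n}" using False r(1-4) mod_shift[of j n ?L]
        by (auto split: if_splits)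
    next
      fix j assume "j \<in> {?L..n} \<union> {1..?L + ?K - 1 - n}"
      then show "j \<in> {j\<in>{1..n}. (j + n - ?L) mod n < ?K}" using False r(1-4) mod_shift[of j n ?L]
        by auto
    qed
    moreover have "{?L..n} \<inter> {1..?L + ?K - 1 - n} = {}" using False r by auto
    ultimately have "(\<Sum>j=1..n. real_of_int (A i j) * w j) = (\<Sum>j=?L..n. w j) + (\<Sum>j=1..?L + ?K - 1 - n. w j)"
      using e by (simp add: sum.union_disjoint)
    then show ?thesis using False r sum_split_ivl[of ?L n w] by simp
  qed
qed




lemma ceil_frac:
  fixes y \<tau> :: real
  assumes "0 \<le> \<tau>" "\<tau> < 1"
  shows "\<lceil>y - \<tau>\<rceil> = \<lfloor>y\<rfloor> + (if \<tau> < frac y then 1 else 0)"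
proof -
  have y: "y - \<tau> = (frac y - \<tau>) + of_int \<lfloor>y\<rfloor>" by (simp add: frac_def)
  have "\<lceil>frac y - \<tau>\<rceil> = (if \<tau> < frac y then 1 else 0)"
  proof (cases "\<tau> < frac y")
    case True then show ?thesis using assms frac_lt_1[of y] by (simp add: ceiling_eq_iff)
  next
    case False
    have "0 \<le> frac y" by simp
    then have "- 1 < frac y - \<tau>" "frac y - \<tau> \<le> 0" using False assms by linarith+
    then show ?thesis using False by (simp add: ceiling_eq_iff)
  qed
  then show ?thesis by (subst y) simp
qed

lemma ceil_step:
  fixes a c :: real
  assumes "c + real_of_int B \<le> a"
  shows "\<lceil>c\<rceil> + B \<le> \<lceil>a\<rceil>"
proof -
  have "\<lceil>c + real_of_int B\<rceil> \<le> \<lceil>a\<rceil>" using assms by (rule ceiling_mono)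
  then show ?thesis by simp
qed

lemma round_lemma:
  assumes cr: "circular_rep m n A l k" and z: "inQ m n A b z"
    and K: "(\<Sum>j=1..n. z j) = real_of_int K"
  shows "inQstar m n A b z"
proof -
  define Y where "Y j = (\<Sum>q=1..j. z q)" for j
  define P where "P \<tau> j = \<lceil>Y j - \<tau>\<rceil>" for \<tau> j
  define p where "p \<tau> j = P \<tau> j - P \<tau> (j - 1)" for \<tau> j
  have znn: "\<And>j. j \<in> {1..n} \<Longrightarrow> 0 \<le> z j" using z by (auto simp: inQ_def)
  have zrow: "\<And>i. i \<in> {1..m} \<Longrightarrow> real_of_int (b i) \<le> (\<Sum>j=1..n. real_of_int (A i j) * z j)"
    using z by (auto simp: inQ_def)
  have Y0: "Y 0 = 0" by (simp add: Y_def)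
  have YK: "Y n = real_of_int K" using K by (simp add: Y_def)
  have P0: "P \<tau> 0 = 0" if "0 \<le> \<tau>" "\<tau> < 1" for \<tau>
    using that by (simp add: P_def Y0 ceiling_eq_iff)
  have tele: "(\<Sum>q=1..j. real_of_int (p \<tau> q)) = real_of_int (P \<tau> j) - real_of_int (P \<tau> 0)" for \<tau> j
    by (induction j) (auto simp: p_def)
  have PK: "P \<tau> n = K" if "0 \<le> \<tau>" "\<tau> < 1" for \<tau>
  proof -
    have "P \<tau> n = \<lceil>- \<tau> + real_of_int K\<rceil>" by (simp add: P_def YK)
    also have "\<dots> = \<lceil>- \<tau>\<rceil> + K" by (rule ceiling_add_of_int)
    also have "\<dots> = K" using P0[OF that] by (simp add: P_def Y0)
    finally show ?thesis .
  qed
  have ptQ: "inQ m n A b (\<lambda>j. real_of_int (p \<tau> j))" if t: "0 \<le> \<tau>" "\<tau> < 1" for \<tau>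
    unfolding inQ_def
  proof (intro conjI ballI)
    fix j assume j: "j \<in> {1..n}"
    then have "Y j = Y (j - 1) + z j" unfolding Y_def by (cases j) auto
    then have "Y (j - 1) - \<tau> \<le> Y j - \<tau>" using znn[OF j] by simp
    then have "P \<tau> (j - 1) \<le> P \<tau> j" unfolding P_def by (rule ceiling_mono)
    then show "0 \<le> real_of_int (p \<tau> j)" by (simp add: p_def)
  next
    fix i assume i: "i \<in> {1..m}"
    have tl: "(\<Sum>q=1..j. real_of_int (p \<tau> q)) = real_of_int (P \<tau> j)" for j
      using tele P0[OF t] by simp
    note rz = rowsum[OF cr i, of z, folded Y_def]
    note rp = rowsum[OF cr i, of "\<lambda>j. real_of_int (p \<tau> j)", unfolded tl]
    show "real_of_int (b i) \<le> (\<Sum>j=1..n. real_of_int (A i j) * real_of_int (p \<tau> j))"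
    proof (cases "l i + k i - 1 \<le> n")
      case True
      have "Y (l i - 1) - \<tau> + real_of_int (b i) \<le> Y (l i + k i - 1) - \<tau>"
        using zrow[OF i] rz True by simp
      then have "P \<tau> (l i - 1) + b i \<le> P \<tau> (l i + k i - 1)" unfolding P_def by (rule ceil_step)
      then show ?thesis using rp True by simp
    next
      case False
      have "Y (l i - 1) - \<tau> + real_of_int (b i - K) \<le> Y (l i + k i - 1 - n) - \<tau>"
        using zrow[OF i] rz False YK by simp
      then have "P \<tau> (l i - 1) + (b i - K) \<le> P \<tau> (l i + k i - 1 - n)" unfolding P_def by (rule ceil_step)
      then show ?thesis using rp False PK[OF t] by simp
    qed
  qed
  define F where "F = {0, 1} \<union> (\<lambda>j. frac (Y j)) ` {0..n}"
  have finF: "finite F" by (simp add: F_def)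
  obtain ts where ts: "sorted_wrt (<) ts" "set ts = F"
    using finite_set_strict_sorted[OF finF] by blast
  have tsr: "0 \<le> t \<and> t \<le> 1" if "t \<in> set ts" for t
    using that ts(2) by (auto simp: F_def intro: less_imp_le[OF frac_lt_1])
  have mono: "ts ! s < ts ! r" if "s < r" "r < length ts" for s r
    using sorted_wrt_nth_less[OF ts(1) that] .
  have monoiff: "ts ! s < ts ! r \<longleftrightarrow> s < r" if "s < length ts" "r < length ts" for s r
    using mono that by (metis less_asym linorder_neqE_nat)
  define N where "N = length ts - 1"
  obtain r0 where r0: "r0 < length ts" "ts ! r0 = 0"
    using ts(2) by (metis F_def Un_iff in_set_conv_nth insertI1)
  obtain r1 where r1: "r1 < length ts" "ts ! r1 = 1"
    using ts(2) by (metis F_def Un_iff in_set_conv_nth insertI1 insertI2)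
  have lt: "0 < length ts" using r0 by (metis gr_implies_not0 neq0_conv)
  have ts0: "ts ! 0 = 0"
  proof (rule ccontr)
    assume "ts ! 0 \<noteq> 0"
    then have "0 < r0" using r0 by (cases r0) auto
    then have "ts ! 0 < 0" using mono[OF _ r0(1)] r0 by simp
    then show False using tsr[of "ts ! 0"] lt by simp
  qed
  have tsN: "ts ! N = 1"
  proof (rule ccontr)
    assume "ts ! N \<noteq> 1"
    then have "r1 < N" using r1 unfolding N_def by (metis Suc_pred' lt less_SucE)
    then have "1 < ts ! N" using mono[of r1 N] r1 N_def lt by simp
    then show False using tsr[of "ts ! N"] lt N_def by simp
  qed
  have NL: "N < length ts" using lt N_def by simp
  have rng: "0 \<le> ts ! s \<and> ts ! s < 1" if "s < N" for s
    using that tsr[of "ts ! s"] mono[of s N] NL tsN by auto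
  define w where "w s = ts ! Suc s - ts ! s" for s
  have wnn: "0 \<le> w s" if "s < N" for s
    using mono[of s "Suc s"] that NL unfolding w_def N_def by simp
  have wsum: "(\<Sum>s<r. w s) = ts ! r - ts ! 0" for r
    unfolding w_def by (rule sum_lessThan_telescope)
  have comb: "(\<Sum>s<N. w s * real_of_int (P (ts ! s) j)) = Y j" if j: "j \<in> {0..n}" for j
  proof -
    have "frac (Y j) \<in> set ts" using ts(2) j by (auto simp: F_def)
    then obtain r where r: "r < length ts" "ts ! r = frac (Y j)" by (metis in_set_conv_nth)
    have "r \<noteq> N" using r tsN frac_lt_1[of "Y j"] by auto
    then have rN: "r < N" using r N_def by simp
    have "(\<Sum>s<N. w s * real_of_int (P (ts ! s) j))
        = (\<Sum>s<N. w s * real_of_int \<lfloor>Y j\<rfloor> + (if s < r then w s else 0))"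
    proof (intro sum.cong refl)
      fix s assume s: "s \<in> {..<N}"
      have "P (ts ! s) j = \<lfloor>Y j\<rfloor> + (if ts ! s < frac (Y j) then 1 else 0)"
        unfolding P_def using rng[of s] s by (intro ceil_frac) auto
      moreover have "ts ! s < frac (Y j) \<longleftrightarrow> s < r" using monoiff[of s r] r s NL by simp
      ultimately show "w s * real_of_int (P (ts ! s) j) = w s * real_of_int \<lfloor>Y j\<rfloor> + (if s < r then w s else 0)"
        by (simp add: algebra_simps)
    qed
    also have "\<dots> = (\<Sum>s<N. w s) * real_of_int \<lfloor>Y j\<rfloor> + (\<Sum>s<N. if s < r then w s else 0)"
      by (simp add: sum.distrib sum_distrib_right)
    also have "(\<Sum>s<N. if s < r then w s else 0) = (\<Sum>s\<in>{s\<in>{..<N}. s < r}. w s)"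
      by (rule sum.inter_filter[symmetric]) simp
    also have "{s\<in>{..<N}. s < r} = {..<r}" using rN by auto
    finally show ?thesis using wsum[of N] wsum[of r] ts0 tsN r by (simp add: frac_def)
  qed
  show ?thesis
    unfolding inQstar_def
  proof (intro exI conjI allI impI ballI)
    show "(\<Sum>t<N. w t) = 1" using wsum[of N] ts0 tsN by simp
  next
    fix t assume "t < N"
    then show "0 \<le> w t" "inQ m n A b (\<lambda>j. real_of_int (p (ts ! t) j))"
      using wnn ptQ rng by auto
  next
    fix j assume j: "j \<in> {1..n}"
    have zj: "z j = Y j - Y (j - 1)" using j unfolding Y_def by (cases j) auto
    have "(\<Sum>t<N. w t * real_of_int (p (ts ! t) j))
        = (\<Sum>t<N. w t * real_of_int (P (ts ! t) j)) - (\<Sum>t<N. w t * real_of_int (P (ts ! t) (j - 1)))"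
      by (simp add: p_def algebra_simps sum_subtractf)
    also have "\<dots> = z j" using comb[of j] comb[of "j - 1"] j zj by auto
    finally show "z j = (\<Sum>t<N. w t * real_of_int (p (ts ! t) j))" by simp
  qed
qed




lemma sum_lessThan_add_split: "(\<Sum>t<a+c. f t) = (\<Sum>t<a. f t) + (\<Sum>t<c. f (a + t))"
  for f :: "nat \<Rightarrow> real"
  by (induction c) auto

lemma combine:
  assumes z1: "inQstar m n A b z1" and z2: "inQstar m n A b z2"
    and mu: "0 \<le> \<mu>" "\<mu> \<le> 1"
    and x: "\<forall>j\<in>{1..n}. x j = \<mu> * z1 j + (1 - \<mu>) * z2 j"
  shows "inQstar m n A b x"
proof -
  obtain N1 :: nat and p1 w1 where h1: "\<forall>t<N1. 0 \<le> w1 t \<and> inQ m n A b (\<lambda>j. real_of_int (p1 t j))"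
    "(\<Sum>t<N1. w1 t) = 1" "\<forall>j\<in>{1..n}. z1 j = (\<Sum>t<N1. w1 t * real_of_int (p1 t j))"
    using z1 unfolding inQstar_def by blast
  obtain N2 :: nat and p2 w2 where h2: "\<forall>t<N2. 0 \<le> w2 t \<and> inQ m n A b (\<lambda>j. real_of_int (p2 t j))"
    "(\<Sum>t<N2. w2 t) = 1" "\<forall>j\<in>{1..n}. z2 j = (\<Sum>t<N2. w2 t * real_of_int (p2 t j))"
    using z2 unfolding inQstar_def by blast
  define p where "p t = (if t < N1 then p1 t else p2 (t - N1))" for t
  define w where "w t = (if t < N1 then \<mu> * w1 t else (1 - \<mu>) * w2 (t - N1))" for t
  have s1: "(\<Sum>t<N1. f t) = (\<Sum>t<N1. g t)" if "\<And>t. t < N1 \<Longrightarrow> f t = g t" for f g :: "nat \<Rightarrow> real"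
    using that by (intro sum.cong) auto
  show ?thesis unfolding inQstar_def
  proof (intro exI[of _ "N1 + N2"] exI[of _ p] exI[of _ w] conjI allI impI ballI)
    fix t assume t: "t < N1 + N2"
    show "0 \<le> w t" using h1(1) h2(1) t mu by (auto simp: w_def)
    show "inQ m n A b (\<lambda>j. real_of_int (p t j))" using h1(1) h2(1) t by (auto simp: p_def)
  next
    have "(\<Sum>t<N1 + N2. w t) = (\<Sum>t<N1. \<mu> * w1 t) + (\<Sum>t<N2. (1 - \<mu>) * w2 t)"
      unfolding sum_lessThan_add_split by (simp add: w_def)
    also have "\<dots> = 1" using h1(2) h2(2) by (simp add: sum_distrib_left[symmetric])
    finally show "(\<Sum>t<N1 + N2. w t) = 1" .
  next
    fix j assume j: "j \<in> {1..n}"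
    have "(\<Sum>t<N1 + N2. w t * real_of_int (p t j))
      = \<mu> * (\<Sum>t<N1. w1 t * real_of_int (p1 t j)) + (1 - \<mu>) * (\<Sum>t<N2. w2 t * real_of_int (p2 t j))"
      unfolding sum_lessThan_add_split by (simp add: w_def p_def sum_distrib_left mult.assoc)
    then show "x j = (\<Sum>t<N1 + N2. w t * real_of_int (p t j))" using x h1(3) h2(3) j by simp
  qed
qed

lemma prefix_d:
  fixes \<pi> :: "nat \<Rightarrow> real"
  assumes "0 < n" "j \<le> n"
  shows "(\<Sum>q=1..j. \<pi> (q mod n) - \<pi> (q - 1) + (if q = n then 1 else 0))
         = \<pi> (j mod n) - \<pi> 0 + (if j = n then 1 else 0)"
  using assms(2)
proof (induction j)
  case 0 then show ?case using assms by simp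
next
  case (Suc j)
  then have "j < n" by simp
  with Suc show ?case by simp
qed

lemma rowd:
  fixes \<pi> :: "nat \<Rightarrow> real"
  assumes cr: "circular_rep m n A l k" and i: "i \<in> {1..m}"
  shows "(\<Sum>j=1..n. real_of_int (A i j) * (\<pi> (j mod n) - \<pi> (j - 1) + (if j = n then 1 else 0)))
     = \<pi> (fwd_head m n l k i) - \<pi> (fwd_tail m n l k i) + lastcol m n A i"
proof -
  note r = cr_row[OF cr i]
  have n: "0 < n" using r by simp
  note pd = prefix_d[OF n, of _ \<pi>]
  have ft: "fwd_tail m n l k i = l i - 1" using i r by (simp add: fwd_tail_def)
  have An: "A i n = (if n \<le> l i + k i - 1 then 1 else 0)"
    using r(5)[of n] r(1-4) mod_shift[of n n "l i"] n by auto
  have lc: "lastcol m n A i = (if n \<le> l i + k i - 1 then 1 else 0)" using i An by (simp add: lastcol_def)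
  define W where "W j = (\<Sum>q=1..j. \<pi> (q mod n) - \<pi> (q - 1) + (if q = n then 1 else 0))" for j
  have rs: "(\<Sum>j=1..n. real_of_int (A i j) * (\<pi> (j mod n) - \<pi> (j - 1) + (if j = n then 1 else 0)))
     = (if l i + k i - 1 \<le> n then W (l i + k i - 1) - W (l i - 1) else W n - W (l i - 1) + W (l i + k i - 1 - n))"
    unfolding W_def by (rule rowsum[OF cr i])
  have Wt: "W (l i - 1) = \<pi> (l i - 1) - \<pi> 0"
    using pd[of "l i - 1"] r(1-4) unfolding W_def by simp
  consider (a) "l i + k i - 1 < n" | (b) "l i + k i - 1 = n" | (c) "n < l i + k i - 1" by linarith
  then show ?thesis
  proof cases
    case a
    have fh: "fwd_head m n l k i = l i + k i - 1" using i a by (simp add: fwd_head_def)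
    have Wh: "W (l i + k i - 1) = \<pi> (l i + k i - 1) - \<pi> 0"
      using pd[of "l i + k i - 1"] a unfolding W_def by simp
    show ?thesis unfolding rs using a Wh Wt fh ft lc by simp
  next
    case b
    have fh: "fwd_head m n l k i = 0" using i b by (simp add: fwd_head_def)
    have Wh: "W (l i + k i - 1) = 1"
      using pd[of "l i + k i - 1"] b unfolding W_def by simp
    show ?thesis unfolding rs using b Wh Wt fh ft lc by simp
  next
    case c
    have "(l i + k i - 1) mod n = l i + k i - 1 - n"
    proof -
      have "l i + k i - 1 = (l i + k i - 1 - n) + n" using c by simp
      then have "(l i + k i - 1) mod n = (l i + k i - 1 - n) mod n" by (metis mod_add_self2)
      also have "\<dots> = l i + k i - 1 - n" using r(1-4) by simp
      finally show ?thesis .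
    qed
    then have fh: "fwd_head m n l k i = l i + k i - 1 - n" using i by (simp add: fwd_head_def)
    have Wh: "W (l i + k i - 1 - n) = \<pi> (l i + k i - 1 - n) - \<pi> 0"
      using pd[of "l i + k i - 1 - n"] c r(1-4) unfolding W_def by simp
    have Wn: "W n = 1" using pd[of n] unfolding W_def by simp
    show ?thesis unfolding rs using c Wh Wt Wn fh ft lc by simp
  qed
qed




lemma inQ_from_slack:
  assumes "\<forall>r\<in>{1..m+n}. 0 \<le> slack m n A b z r"
  shows "inQ m n A b z"
  unfolding inQ_def
proof (intro conjI ballI)
  fix j assume j: "j \<in> {1..n}"
  then have "0 \<le> slack m n A b z (m + j)" using assms by auto
  then show "0 \<le> z j" using j by (simp add: slack_def)
next
  fix i assume i: "i \<in> {1..m}"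
  then have "0 \<le> slack m n A b z i" using assms by auto
  then show "real_of_int (b i) \<le> (\<Sum>j=1..n. real_of_int (A i j) * z j)" using i by (simp add: slack_def)
qed

lemma slack_shift:
  fixes \<pi> :: "nat \<Rightarrow> real"
  assumes cr: "circular_rep m n A l k" and n: "0 < n" and r: "r \<in> {1..m+n}"
  defines "d \<equiv> \<lambda>j. \<pi> (j mod n) - \<pi> (j - 1) + (if j = n then 1 else 0)"
  shows "slack m n A b (\<lambda>j. x j + c * d j) r
       = slack m n A b x r + c * (\<pi> (fwd_head m n l k r) - \<pi> (fwd_tail m n l k r) + lastcol m n A r)"
proof (cases "r \<le> m")
  case True
  then have ri: "r \<in> {1..m}" using r by simp
  have "(\<Sum>j=1..n. real_of_int (A r j) * (x j + c * d j))
      = (\<Sum>j=1..n. real_of_int (A r j) * x j) + c * (\<Sum>j=1..n. real_of_int (A r j) * d j)"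
    by (simp add: algebra_simps sum.distrib sum_distrib_left)
  also have "(\<Sum>j=1..n. real_of_int (A r j) * d j) = \<pi> (fwd_head m n l k r) - \<pi> (fwd_tail m n l k r) + lastcol m n A r"
    unfolding d_def by (rule rowd[OF cr ri])
  finally show ?thesis using True by (simp add: slack_def)
next
  case False
  define j where "j = r - m"
  have j: "j \<in> {1..n}" "r = m + j" using r False by (auto simp: j_def)
  have ft: "fwd_tail m n l k r = j - 1" using j False by (simp add: fwd_tail_def)
  have fh: "fwd_head m n l k r = j mod n" using j False by (simp add: fwd_head_def)
  show ?thesis using False j ft fh by (simp add: slack_def lastcol_def d_def)
qed

theorem lemma3p5:
  fixes m n :: nat and A :: "nat \<Rightarrow> nat \<Rightarrow> int" and l k :: "nat \<Rightarrow> nat"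
    and b :: "nat \<Rightarrow> int" and x :: "nat \<Rightarrow> real"
  assumes "circular_rep m n A l k"
    and "\<forall>i\<in>{1..m}. 0 \<le> b i"
    and "inQ m n A b x"
    and "\<forall>cs. is_circuit m n l k cs \<longrightarrow> 0 \<le> (\<Sum>a\<leftarrow>cs. arc_cost m n A b x a)"
  shows "inQstar m n A b x"
proof -
  note cr = assms(1) and xQ = assms(3) and cyc = assms(4)
  define S where "S = (\<Sum>j=1..n. x j)"
  define \<mu> where "\<mu> = mu n x"
  have mueq: "\<mu> = real_of_int \<lceil>S\<rceil> - S" by (simp add: \<mu>_def mu_def S_def)
  have mu0: "0 \<le> \<mu>" "\<mu> < 1" unfolding mueq by linarith+
  show ?thesis
  proof (cases "\<mu> = 0")
    case True
    then have "S = real_of_int \<lceil>S\<rceil>" using mueq by linarith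
    then show ?thesis using round_lemma[OF cr xQ] unfolding S_def by metis
  next
    case False
    then have mpos: "0 < \<mu>" using mu0 by simp
    have n: "0 < n"
    proof (rule ccontr)
      assume "\<not> 0 < n"
      then have "S = 0" by (simp add: S_def)
      then show False using False mueq by simp
    qed
    define E where "E = {a. arc_valid m n a}"
    have finE: "finite E"
    proof -
      have "E = {1..m+n} \<times> UNIV" by (auto simp: E_def arc_valid_def)
      then show ?thesis by simp
    qed
    obtain \<phi> where phi: "\<forall>a\<in>E. \<phi> (arc_head m n l k a) \<le> \<phi> (arc_tail m n l k a) + arc_cost m n A b x a"
    proof -
      have "\<exists>\<phi>. \<forall>a\<in>E. \<phi> (arc_head m n l k a) \<le> \<phi> (arc_tail m n l k a) + arc_cost m n A b x a"
      proof (rule potentials[OF finE])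
        fix u cs assume h: "cs \<noteq> []" "set cs \<subseteq> E" "walk (arc_tail m n l k) (arc_head m n l k) u cs u"
          "distinct (map (arc_tail m n l k) cs)"
        have "is_circuit m n l k cs"
          unfolding is_circuit_def using h walk_cyclic[OF h(3) h(1)] by (auto simp: E_def)
        then show "0 \<le> sum_list (map (arc_cost m n A b x) cs)" using cyc by simp
      qed
      then show ?thesis using that by blast
    qed
    define \<pi> where "\<pi> v = \<phi> v / (\<mu> * (1 - \<mu>))" for v
    have pm: "\<mu> * (1 - \<mu>) > 0" using mpos mu0 by simp
    have phipi: "\<phi> v = \<mu> * (1 - \<mu>) * \<pi> v" for v using pm unfolding \<pi>_def by (metis less_irrefl nonzero_mult_div_cancel_left times_divide_eq_right)
    define d where "d = (\<lambda>j. \<pi> (j mod n) - \<pi> (j - 1) + (if j = n then 1 else (0::real)))"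
    define z1 where "z1 j = x j + (- (1 - \<mu>)) * d j" for j
    define z2 where "z2 j = x j + \<mu> * d j" for j
    have slacks: "0 \<le> slack m n A b z1 r \<and> 0 \<le> slack m n A b z2 r" if r: "r \<in> {1..m+n}" for r
    proof -
      let ?s = "slack m n A b x r" and ?v = "lastcol m n A r"
      let ?h = "fwd_head m n l k r" and ?t = "fwd_tail m n l k r"
      have e1: "slack m n A b z1 r = ?s + (- (1 - \<mu>)) * (\<pi> ?h - \<pi> ?t + ?v)"
        unfolding z1_def d_def by (rule slack_shift[OF cr n r])
      have e2: "slack m n A b z2 r = ?s + \<mu> * (\<pi> ?h - \<pi> ?t + ?v)"
        unfolding z2_def d_def by (rule slack_shift[OF cr n r])
      have aT: "(r, True) \<in> E" "(r, False) \<in> E" using r by (auto simp: E_def arc_valid_def)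
      have p1: "\<phi> ?h \<le> \<phi> ?t + \<mu> * (?s - (1 - \<mu>) * ?v)"
        using phi aT(1) by (auto simp: arc_head_def arc_tail_def arc_cost_def cplus_def \<mu>_def)
      have p2: "\<phi> ?t \<le> \<phi> ?h + (1 - \<mu>) * (?s + \<mu> * ?v)"
        using phi aT(2) by (auto simp: arc_head_def arc_tail_def arc_cost_def cminus_def \<mu>_def)
      have q1: "0 \<le> \<mu> * (?s + (- (1 - \<mu>)) * (\<pi> ?h - \<pi> ?t + ?v))"
        using p1 unfolding phipi by (simp add: algebra_simps)
      have q2: "0 \<le> (1 - \<mu>) * (?s + \<mu> * (\<pi> ?h - \<pi> ?t + ?v))"
        using p2 unfolding phipi by (simp add: algebra_simps)
      have "0 \<le> ?s + (- (1 - \<mu>)) * (\<pi> ?h - \<pi> ?t + ?v)"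
        using q1 mpos by (simp add: zero_le_mult_iff)
      moreover have "0 \<le> ?s + \<mu> * (\<pi> ?h - \<pi> ?t + ?v)"
        using q2 mu0 by (simp add: zero_le_mult_iff)
      ultimately show ?thesis using e1 e2 by simp
    qed
    have z1Q: "inQ m n A b z1" using slacks by (intro inQ_from_slack) auto
    have z2Q: "inQ m n A b z2" using slacks by (intro inQ_from_slack) auto
    have sd: "(\<Sum>j=1..n. d j) = 1" using prefix_d[OF n order.refl, of \<pi>] by (simp add: d_def)
    have s1: "(\<Sum>j=1..n. z1 j) = real_of_int (\<lceil>S\<rceil> - 1)"
      using sd mueq by (simp add: z1_def sum.distrib sum_distrib_left[symmetric] S_def)
    have s2: "(\<Sum>j=1..n. z2 j) = real_of_int \<lceil>S\<rceil>"
      using sd mueq by (simp add: z2_def sum.distrib sum_distrib_left[symmetric] S_def)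
    show ?thesis
    proof (rule combine[OF round_lemma[OF cr z1Q s1] round_lemma[OF cr z2Q s2]])
      show "0 \<le> \<mu>" "\<mu> \<le> 1" using mu0 by simp_all
      show "\<forall>j\<in>{1..n}. x j = \<mu> * z1 j + (1 - \<mu>) * z2 j"
        by (simp add: z1_def z2_def algebra_simps)
    qed
  qed
qed


end
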